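(* Let $(Y,d)$ be a complete separable metric space and $f:Y\to Y$ continuous. Let $K\neq\varnothing$ be an isolated invariant set of $f$, and let $N,N'$ be two $f$-admissible isolating neighborhoods of $K$ with \[ N\subset \operatorname{int}N'\cap f^{-1}(\operatorname{int}N'). \] Assume moreover that \[ A^-(N)=A(N)=K. \] Then there exists an $f$-admissible isolating neighborhood $B\subset N$ of $K$ which is positively invariant, i.e. $f(B)\subset B$.
   Context: A full left solution of $f$ in a set $N$ is a sequence $\{x_{-n}\}_{n\in\mathbb N}\subset N$ with $f(x_{n-1})=x_n$ for all $n\le 0$. The following sets are defined for $N\subset Y$: \begin{itemize} \item $A^+(N)=\{x\in N: f^k(x)\in N \text{ for all } k\ge0\}$; \item $A^-(N)=\{x\in N: \text{there is a full left solution in } N \text{ through } x_0=x\}$; \item $A(N)=A^+(N)\cap A^-(N)$, the maximal invariant set in $N$. \end{itemize} A set $K$ is invariant if $A(K)=K$. It is an isolated invariant set, with isolating neighborhood $N$, if $N$ is a closed neighborhood of $K$ with $A(N)=K$. For $0\le l\le m$ put $f^{[l,m]}(x)=\{f^k(x): k\in\mathbb N\cap[l,m]\}$. A closed bounded set $N$ is $f$-admissible if, for any sequences $x_n\in Y$ and $m_n\to\infty$ with $f^{[0,m_n]}(x_n)\subset N$, the sequence $\{f^{m_n}(x_n)\}$ has a convergent subsequence. *)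

theory Defs
  imports "HOL-Analysis.Analysis"
begin

text \<open>A full left solution through x in N is encoded as s :: nat => 'a with s n = x_{-n}.\<close>

definition full_left_solution :: "('a \<Rightarrow> 'a) \<Rightarrow> 'a set \<Rightarrow> (nat \<Rightarrow> 'a) \<Rightarrow> bool" where
  "full_left_solution f N s \<longleftrightarrow> (\<forall>n. s n \<in> N \<and> f (s (Suc n)) = s n)"

definition Aplus :: "('a \<Rightarrow> 'a) \<Rightarrow> 'a set \<Rightarrow> 'a set" where
  "Aplus f N = {x \<in> N. \<forall>k. (f ^^ k) x \<in> N}"

definition Aminus :: "('a \<Rightarrow> 'a) \<Rightarrow> 'a set \<Rightarrow> 'a set" where
  "Aminus f N = {x \<in> N. \<exists>s. full_left_solution f N s \<and> s 0 = x}"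

definition Ainv :: "('a \<Rightarrow> 'a) \<Rightarrow> 'a set \<Rightarrow> 'a set" where
  "Ainv f N = Aplus f N \<inter> Aminus f N"

definition invariant_set :: "('a \<Rightarrow> 'a) \<Rightarrow> 'a set \<Rightarrow> bool" where
  "invariant_set f K \<longleftrightarrow> Ainv f K = K"

definition isolating_nbhd :: "('a::topological_space \<Rightarrow> 'a) \<Rightarrow> 'a set \<Rightarrow> 'a set \<Rightarrow> bool" where
  "isolating_nbhd f N K \<longleftrightarrow> closed N \<and> K \<subseteq> interior N \<and> Ainv f N = K"

definition isolated_invariant_set :: "('a::topological_space \<Rightarrow> 'a) \<Rightarrow> 'a set \<Rightarrow> bool" where
  "isolated_invariant_set f K \<longleftrightarrow> invariant_set f K \<and> (\<exists>N. isolating_nbhd f N K)"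

definition admissible :: "('a::metric_space \<Rightarrow> 'a) \<Rightarrow> 'a set \<Rightarrow> bool" where
  "admissible f N \<longleftrightarrow> closed N \<and> bounded N \<and>
     (\<forall>(x :: nat \<Rightarrow> 'a) (m :: nat \<Rightarrow> nat).
        filterlim m at_top sequentially \<longrightarrow>
        (\<forall>n. \<forall>k \<le> m n. (f ^^ k) (x n) \<in> N) \<longrightarrow>
        (\<exists>r. strict_mono r \<and> convergent ((\<lambda>n. (f ^^ m n) (x n)) \<circ> r)))"

end

theory Submission
  imports Defs
begin

lemma funpow_cont_tendsto:
  fixes f :: "'a::metric_space \<Rightarrow> 'a" and X :: "nat \<Rightarrow> 'a" and k :: nat
  assumes cont: "continuous_on UNIV f" and hX: "X \<longlonglongrightarrow> y"
  shows "(\<lambda>n. (f ^^ k) (X n)) \<longlonglongrightarrow> (f ^^ k) y"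
proof (induction k)
  case 0 then show ?case using hX by (simp add: funpow_0)
next
  case (Suc k)
  have "isCont f ((f ^^ k) y)" using cont by (simp add: continuous_on_eq_continuous_at)
  from isCont_tendsto_compose[OF this Suc] show ?case by simp
qed

lemma left_sol_lemma:
  fixes f :: "'a::metric_space \<Rightarrow> 'a" and m :: "nat \<Rightarrow> nat"
  assumes cont: "continuous_on UNIV f" and adm: "admissible f N"
    and m: "filterlim m at_top sequentially"
    and orb: "\<forall>n. \<forall>k\<le>m n. (f ^^ k) (x n) \<in> N"
    and lim: "(\<lambda>n. (f ^^ m n) (x n)) \<longlonglongrightarrow> y"
  shows "y \<in> Aminus f N"
proof -
  have clN: "closed N" using adm by (simp add: admissible_def)
  have adm_cond: "\<exists>r. strict_mono r \<and> convergent ((\<lambda>n. (f ^^ mm n) (xx n)) \<circ> r)"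
    if "filterlim mm at_top sequentially" "\<forall>n. \<forall>k \<le> mm n. (f ^^ k) (xx n) \<in> N" for mm xx
  proof -
    have H: "\<forall>(x :: nat \<Rightarrow> 'a) (m :: nat \<Rightarrow> nat).
        filterlim m at_top sequentially \<longrightarrow>
        (\<forall>n. \<forall>k \<le> m n. (f ^^ k) (x n) \<in> N) \<longrightarrow>
        (\<exists>r. strict_mono r \<and> convergent ((\<lambda>n. (f ^^ m n) (x n)) \<circ> r))"
      using adm unfolding admissible_def by (elim conjE)
    show ?thesis using H[rule_format, of mm xx] that by blast
  qed
  define P where "P = (\<lambda>j r. strict_mono r \<and> convergent (\<lambda>n. (f ^^ (m (r n) - j)) (x (r n))))"
  define R where "R = rec_nat id (\<lambda>j r. SOME r'. (\<exists>s. strict_mono s \<and> r' = r \<circ> s) \<and>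
       convergent (\<lambda>n. (f ^^ (m (r' n) - Suc j)) (x (r' n))))"
  have R0: "R 0 = id" by (simp add: R_def)
  have RS: "R (Suc j) = (SOME r'. (\<exists>s. strict_mono s \<and> r' = R j \<circ> s) \<and>
       convergent (\<lambda>n. (f ^^ (m (r' n) - Suc j)) (x (r' n))))" for j by (simp add: R_def)
  have step: "\<exists>r'. (\<exists>s. strict_mono s \<and> r' = r \<circ> s) \<and>
       convergent (\<lambda>n. (f ^^ (m (r' n) - Suc j)) (x (r' n)))" if "strict_mono r" for r :: "nat \<Rightarrow> nat" and j
  proof -
    have mr: "filterlim (\<lambda>n. m (r n)) at_top sequentially"
      using filterlim_compose[OF m filterlim_subseq[OF that]] by (simp add: comp_def)
    have "filterlim (\<lambda>n. m (r n) - Suc j) at_top sequentially"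
      unfolding filterlim_at_top
    proof
      fix Z
      from mr have "eventually (\<lambda>n. Z + Suc j \<le> m (r n)) sequentially"
        by (simp add: filterlim_at_top)
      then show "eventually (\<lambda>n. Z \<le> m (r n) - Suc j) sequentially"
        by (rule eventually_mono) simp
    qed
    moreover have "\<forall>n. \<forall>k\<le>m (r n) - Suc j. (f ^^ k) (x (r n)) \<in> N"
      using orb by auto
    ultimately obtain s where s: "strict_mono s"
      "convergent ((\<lambda>n. (f ^^ (m (r n) - Suc j)) (x (r n))) \<circ> s)"
      using adm_cond[of "\<lambda>n. m (r n) - Suc j" "\<lambda>n. x (r n)"] by blast
    show ?thesis
      by (rule exI[of _ "r \<circ> s"]) (use s in \<open>auto simp: comp_def\<close>)
  qed
  have PR: "P j (R j)" for j
  proof (induction j)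
    case 0 show ?case using lim by (auto simp: P_def R0 convergent_def strict_mono_def)
  next
    case (Suc j)
    then have "strict_mono (R j)" by (simp add: P_def)
    from someI_ex[OF step[OF this, of j]] have
      "(\<exists>s. strict_mono s \<and> R (Suc j) = R j \<circ> s) \<and>
       convergent (\<lambda>n. (f ^^ (m (R (Suc j) n) - Suc j)) (x (R (Suc j) n)))"
      unfolding RS .
    then show ?case using \<open>strict_mono (R j)\<close> by (auto simp: P_def intro: strict_mono_o)
  qed
  have RSs: "\<exists>s. strict_mono s \<and> R (Suc j) = R j \<circ> s" for j
  proof -
    have "strict_mono (R j)" using PR[of j] by (simp add: P_def)
    from someI_ex[OF step[OF this, of j]] show ?thesis unfolding RS by blast
  qed
  define Z where "Z j = lim (\<lambda>n. (f ^^ (m (R j n) - j)) (x (R j n)))" for j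
  have Zlim: "(\<lambda>n. (f ^^ (m (R j n) - j)) (x (R j n))) \<longlonglongrightarrow> Z j" for j
    using PR[of j] unfolding P_def Z_def by (simp add: convergent_LIMSEQ_iff)
  have Z0: "Z 0 = y" using Zlim[of 0] lim R0 by (simp add: LIMSEQ_unique)
  have ZN: "Z j \<in> N" for j
    by (rule closed_sequentially[OF clN _ Zlim[of j]]) (use orb in auto)
  have Zf: "f (Z (Suc j)) = Z j" for j
  proof -
    obtain s where s: "strict_mono s" "R (Suc j) = R j \<circ> s" using RSs by blast
    have "isCont f (Z (Suc j))" using cont by (simp add: continuous_on_eq_continuous_at)
    from isCont_tendsto_compose[OF this Zlim[of "Suc j"]]
    have A: "(\<lambda>n. f ((f ^^ (m (R (Suc j) n) - Suc j)) (x (R (Suc j) n)))) \<longlonglongrightarrow> f (Z (Suc j))" .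
    have B: "(\<lambda>n. (f ^^ (m (R (Suc j) n) - j)) (x (R (Suc j) n))) \<longlonglongrightarrow> Z j"
      using LIMSEQ_subseq_LIMSEQ[OF Zlim[of j] s(1)] s(2) by (simp add: comp_def)
    have sm: "strict_mono (R (Suc j))" using PR by (simp add: P_def)
    have "filterlim (\<lambda>n. m (R (Suc j) n)) at_top sequentially"
      using filterlim_compose[OF m filterlim_subseq[OF sm]] by (simp add: comp_def)
    then have ev: "eventually (\<lambda>n. Suc j \<le> m (R (Suc j) n)) sequentially"
      by (simp add: filterlim_at_top)
    have "eventually (\<lambda>n. f ((f ^^ (m (R (Suc j) n) - Suc j)) (x (R (Suc j) n))) =
        (f ^^ (m (R (Suc j) n) - j)) (x (R (Suc j) n))) sequentially"
    proof (rule eventually_mono[OF ev])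
      fix n assume "Suc j \<le> m (R (Suc j) n)"
      then have "m (R (Suc j) n) - j = Suc (m (R (Suc j) n) - Suc j)" by simp
      then show "f ((f ^^ (m (R (Suc j) n) - Suc j)) (x (R (Suc j) n))) =
        (f ^^ (m (R (Suc j) n) - j)) (x (R (Suc j) n))" by simp
    qed
    from tendsto_cong[OF this] A have A': "(\<lambda>n. (f ^^ (m (R (Suc j) n) - j)) (x (R (Suc j) n))) \<longlonglongrightarrow> f (Z (Suc j))"
      by simp
    show ?thesis using LIMSEQ_unique[OF A' B] .
  qed
  have "full_left_solution f N Z" unfolding full_left_solution_def using ZN Zf by auto
  then show ?thesis unfolding Aminus_def using Z0 ZN[of 0] by auto
qed

theorem theorem1:
  fixes f :: "'a::{complete_space, second_countable_topology} \<Rightarrow> 'a"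
    and K N N' :: "'a set"
  assumes "continuous_on UNIV f"
    and "K \<noteq> {}"
    and "isolated_invariant_set f K"
    and "admissible f N" and "isolating_nbhd f N K"
    and "admissible f N'" and "isolating_nbhd f N' K"
    and "N \<subseteq> interior N' \<inter> f -` interior N'"
    and "Aminus f N = Ainv f N" and "Ainv f N = K"
  shows "\<exists>B. B \<subseteq> N \<and> admissible f B \<and> isolating_nbhd f B K \<and> f ` B \<subseteq> B"
proof -
  note cont = assms(1) and adm = assms(4)
  have AmK: "Aminus f N = K" using assms(9,10) by simp
  have AiK: "Ainv f N = K" using assms(10) .
  have KintN: "K \<subseteq> interior N" using assms(5) by (simp add: isolating_nbhd_def)
  have clN: "closed N" and bdN: "bounded N" using adm by (auto simp: admissible_def)
  have KN: "K \<subseteq> N" using KintN interior_subset by blast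
  have KAp: "K \<subseteq> Aplus f N" using AiK by (auto simp: Ainv_def)
  have fK: "f z \<in> K" if z: "z \<in> K" for z
  proof -
    have fzN: "f z \<in> N" using KAp z unfolding Aplus_def
      by (auto dest!: bspec[of _ _ z] elim!: allE[of _ 1])
    from z AmK obtain s where s: "full_left_solution f N s" "s 0 = z"
      unfolding Aminus_def by blast
    define s' where "s' = case_nat (f z) s"
    have "full_left_solution f N s'"
      unfolding full_left_solution_def
    proof
      fix n
      show "s' n \<in> N \<and> f (s' (Suc n)) = s' n"
        using s fzN unfolding s'_def full_left_solution_def
        by (cases n) auto
    qed
    then have "f z \<in> Aminus f N" unfolding Aminus_def using fzN by (auto simp: s'_def)
    then show ?thesis using AmK by simp
  qed
  have fkK: "(f ^^ k) z \<in> K" if "z \<in> K" for z k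
    using that by (induction k) (auto intro: fK)
  have iso: "isCont f x" for x using cont by (simp add: continuous_on_eq_continuous_at)
  have local: "\<exists>e>0. \<forall>x\<in>ball y e. \<forall>k. (f ^^ k) x \<in> N" if yK: "y \<in> K" for y
  proof (rule ccontr)
    assume neg: "\<not> ?thesis"
    from yK KintN obtain e0 where e0: "e0 > 0" "ball y e0 \<subseteq> N"
      by (meson open_contains_ball open_interior subset_iff interior_subset subset_trans)
    have "\<exists>x. x \<in> ball y (min e0 (inverse (real (Suc n)))) \<and> (\<exists>k. (f ^^ k) x \<notin> N)" for n
    proof -
      have pos: "min e0 (inverse (real (Suc n))) > 0" using e0(1) by simp
      from neg have "\<forall>e>0. \<exists>x\<in>ball y e. \<exists>k. (f ^^ k) x \<notin> N" by blast
      then show ?thesis using pos by blast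
    qed
    then obtain X where X: "\<And>n. X n \<in> ball y (min e0 (inverse (real (Suc n))))"
      "\<And>n. \<exists>k. (f ^^ k) (X n) \<notin> N" by metis
    have XN: "X n \<in> N" for n using X(1)[of n] e0(2) by auto
    have Xlim: "X \<longlonglongrightarrow> y"
    proof -
      have "(\<lambda>n. dist (X n) y) \<longlonglongrightarrow> 0"
      proof (rule Lim_null_comparison)
        show "\<forall>\<^sub>F n in sequentially. norm (dist (X n) y) \<le> inverse (real (Suc n))"
          using X(1) by (intro always_eventually allI) (auto simp: dist_commute less_imp_le)
        show "(\<lambda>n. inverse (real (Suc n))) \<longlonglongrightarrow> 0" by (rule LIMSEQ_inverse_real_of_nat)
      qed
      then show ?thesis using tendsto_dist_iff by blast
    qed
    define M where "M n = (LEAST k. (f ^^ k) (X n) \<notin> N)" for n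
    have Mout: "(f ^^ M n) (X n) \<notin> N" for n
      unfolding M_def using X(2)[of n] by (metis (mono_tags, lifting) LeastI_ex)
    have Min: "k < M n \<Longrightarrow> (f ^^ k) (X n) \<in> N" for n k
      unfolding M_def using not_less_Least by blast
    have M1: "M n \<noteq> 0" for n using Mout[of n] XN[of n] by (metis funpow_0)
    have Mtop: "filterlim M at_top sequentially"
      unfolding filterlim_at_top
    proof
      fix c
      have "\<forall>k\<in>{..<c}. eventually (\<lambda>n. (f ^^ k) (X n) \<in> interior N) sequentially"
      proof
        fix k
        have "(f ^^ k) y \<in> interior N" using fkK[OF yK] KintN by blast
        then show "eventually (\<lambda>n. (f ^^ k) (X n) \<in> interior N) sequentially"
          using topological_tendstoD[OF funpow_cont_tendsto[OF cont Xlim, of k]] by blast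
      qed
      from eventually_ball_finite[OF _ this]
      have "eventually (\<lambda>n. \<forall>k\<in>{..<c}. (f ^^ k) (X n) \<in> interior N) sequentially" by simp
      then show "eventually (\<lambda>n. c \<le> M n) sequentially"
      proof (rule eventually_mono)
        fix n assume h: "\<forall>k\<in>{..<c}. (f ^^ k) (X n) \<in> interior N"
        show "c \<le> M n"
        proof (rule ccontr)
          assume "\<not> c \<le> M n"
          then have "(f ^^ M n) (X n) \<in> interior N" using h by auto
          then show False using Mout[of n] interior_subset by blast
        qed
      qed
    qed
    define M' where "M' n = M n - 1" for n
    have M'top: "filterlim M' at_top sequentially"
      unfolding filterlim_at_top
    proof
      fix Z
      from Mtop have "eventually (\<lambda>n. Z + 1 \<le> M n) sequentially"
        by (simp add: filterlim_at_top)
      then show "eventually (\<lambda>n. Z \<le> M' n) sequentially"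
        by (rule eventually_mono) (simp add: M'_def)
    qed
    have orb: "\<forall>n. \<forall>k\<le>M' n. (f ^^ k) (X n) \<in> N"
    proof (intro allI impI)
      fix n k assume "k \<le> M' n"
      then have "k < M n" using M1[of n] by (simp add: M'_def)
      then show "(f ^^ k) (X n) \<in> N" by (rule Min)
    qed
    have H: "\<forall>(x :: nat \<Rightarrow> 'a) (m :: nat \<Rightarrow> nat).
        filterlim m at_top sequentially \<longrightarrow>
        (\<forall>n. \<forall>k \<le> m n. (f ^^ k) (x n) \<in> N) \<longrightarrow>
        (\<exists>r. strict_mono r \<and> convergent ((\<lambda>n. (f ^^ m n) (x n)) \<circ> r))"
      using adm unfolding admissible_def by (elim conjE)
    obtain r where r: "strict_mono r" "convergent ((\<lambda>n. (f ^^ M' n) (X n)) \<circ> r)"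
      using H[rule_format, of M' X] M'top orb by blast
    then obtain z where z: "(\<lambda>n. (f ^^ M' (r n)) (X (r n))) \<longlonglongrightarrow> z"
      by (auto simp: convergent_def comp_def)
    have "filterlim (\<lambda>n. M' (r n)) at_top sequentially"
      using filterlim_compose[OF M'top filterlim_subseq[OF r(1)]] by (simp add: comp_def)
    moreover have "\<forall>n. \<forall>k\<le>M' (r n). (f ^^ k) (X (r n)) \<in> N" using orb by blast
    ultimately have "z \<in> Aminus f N"
      using left_sol_lemma[OF cont adm _ _ z] by blast
    then have "f z \<in> interior N" using AmK fK KintN by blast
    moreover have "(\<lambda>n. f ((f ^^ M' (r n)) (X (r n)))) \<longlonglongrightarrow> f z"
      using isCont_tendsto_compose[OF iso z] .
    moreover have "f ((f ^^ M' (r n)) (X (r n))) = (f ^^ M (r n)) (X (r n))" for n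
    proof -
      have "M (r n) = Suc (M' (r n))" using M1[of "r n"] by (simp add: M'_def)
      then show ?thesis by simp
    qed
    ultimately have "eventually (\<lambda>n. (f ^^ M (r n)) (X (r n)) \<in> interior N) sequentially"
      using topological_tendstoD[of _ "f z" sequentially "interior N"] by simp
    then have "eventually (\<lambda>n. False) sequentially"
      by (rule eventually_mono) (use Mout interior_subset in blast)
    then show False by simp
  qed
  then obtain e where e: "\<And>y. y \<in> K \<Longrightarrow> e y > 0 \<and> (\<forall>x\<in>ball y (e y). \<forall>k. (f ^^ k) x \<in> N)"
    by metis
  define V where "V = (\<Union>y\<in>K. ball y (e y))"
  define S where "S = {(f ^^ k) x | x k. x \<in> V}"
  define B where "B = closure S"
  have openV: "open V" unfolding V_def by auto
  have KV: "K \<subseteq> V" unfolding V_def using e by force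
  have VS: "V \<subseteq> S" unfolding S_def by (force intro: exI[of _ 0])
  have SN: "S \<subseteq> N" unfolding S_def V_def using e by blast
  have BN: "B \<subseteq> N" unfolding B_def using SN clN closure_minimal by blast
  have fS: "f ` S \<subseteq> S" unfolding S_def
  proof
    fix w assume "w \<in> f ` {(f ^^ k) x |x k. x \<in> V}"
    then obtain x k where "x \<in> V" "w = f ((f ^^ k) x)" by blast
    then show "w \<in> {(f ^^ k) x |x k. x \<in> V}"
      by (metis (mono_tags, lifting) comp_apply funpow.simps(2) mem_Collect_eq)
  qed
  have fB: "f ` B \<subseteq> B" unfolding B_def
    by (rule image_closure_subset) (use continuous_on_subset[OF cont] fS closure_subset in auto)
  have KintB: "K \<subseteq> interior B"
    using KV VS openV interior_maximal closure_subset unfolding B_def by (metis subset_trans)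
  have KB: "K \<subseteq> B" using KintB interior_subset by blast
  have AiB: "Ainv f B = K"
  proof
    show "Ainv f B \<subseteq> K"
      using BN AiK unfolding Ainv_def Aplus_def Aminus_def full_left_solution_def by blast
  next
    show "K \<subseteq> Ainv f B"
    proof
      fix z assume zK: "z \<in> K"
      have "z \<in> Aplus f B" unfolding Aplus_def using fkK[OF zK] KB zK by blast
      moreover have "z \<in> Aminus f B"
      proof -
        from zK AmK obtain s where s: "full_left_solution f N s" "s 0 = z"
          unfolding Aminus_def by blast
        have "s n \<in> K" for n
        proof -
          have "full_left_solution f N (\<lambda>i. s (n + i))"
            using s(1) unfolding full_left_solution_def by simp
          moreover have "s n \<in> N" using s(1) unfolding full_left_solution_def by blast
          ultimately have "s n \<in> Aminus f N" unfolding Aminus_def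
            by (auto intro!: exI[of _ "\<lambda>i. s (n + i)"])
          then show ?thesis using AmK by simp
        qed
        then have "full_left_solution f B s"
          using s(1) KB unfolding full_left_solution_def by blast
        then show ?thesis unfolding Aminus_def using s(2) zK KB by blast
      qed
      ultimately show "z \<in> Ainv f B" by (simp add: Ainv_def)
    qed
  qed
  have clB: "closed B" unfolding B_def by simp
  have admB: "admissible f B"
    using adm BN clB bounded_subset[OF bdN BN] unfolding admissible_def by blast
  have "isolating_nbhd f B K" unfolding isolating_nbhd_def using clB KintB AiB by blast
  then show ?thesis using BN admB fB by blast
qed

end
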